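(* Let $G$ be a finite group and $t$ a positive integer. Then $$e(G)\le t+\mu^*(G,t)+\sum_{p\in\pi(G)}\mu_p(G,t).$$
   Context: $e(G)$ is the expected number of uniformly random elements of $G$, drawn independently with replacement, needed until they generate $G$; equivalently $e(G)=\sum_{n\ge0}(1-P_G(n))$ with $P_G(n)$ the probability that $n$ random elements generate $G$. $\pi(G)$ is the set of primes dividing $|G|$. A maximal subgroup $M$ of $G$ is of type A if the socle of $G/\mathrm{core}_G(M)$ is abelian and of type B otherwise; $m_n^A(G)$ (resp. $m_n^B(G)$) is the number of maximal subgroups of $G$ of type A (resp. B) of index $n$. Define $\mu^*(G,t)=\sum_{k\ge t}\sum_{n\ge 5} m_n^B(G)/n^k$ and, for a prime $p$, $\mu_p(G,t)=\sum_{k\ge t}\sum_{n\ge1} m^A_{p^n}(G)/p^{nk}$. *)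

theory Defs
  imports "HOL-Algebra.Algebra" "HOL-Analysis.Analysis"
begin

definition gen_prob :: "('a, 'b) monoid_scheme \<Rightarrow> nat \<Rightarrow> real" where
  "gen_prob G n =
     real (card {f \<in> {..<n} \<rightarrow>\<^sub>E carrier G. generate G (f ` {..<n}) = carrier G})
     / real (card (carrier G)) ^ n"

definition expected_gen :: "('a, 'b) monoid_scheme \<Rightarrow> real" where
  "expected_gen G = suminf (\<lambda>n. 1 - gen_prob G n)"

definition maximal_subgroup :: "('a, 'b) monoid_scheme \<Rightarrow> 'a set \<Rightarrow> bool" where
  "maximal_subgroup G M \<longleftrightarrow> subgroup M G \<and> M \<noteq> carrier G \<and>
     (\<forall>H. subgroup H G \<and> M \<subseteq> H \<longrightarrow> H = M \<or> H = carrier G)"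

definition core :: "('a, 'b) monoid_scheme \<Rightarrow> 'a set \<Rightarrow> 'a set" where
  "core G M = (\<Inter>g\<in>carrier G. (g <#\<^bsub>G\<^esub> M) #>\<^bsub>G\<^esub> inv\<^bsub>G\<^esub> g)"

definition minimal_normal :: "('a, 'b) monoid_scheme \<Rightarrow> 'a set \<Rightarrow> bool" where
  "minimal_normal G N \<longleftrightarrow> N \<lhd> G \<and> N \<noteq> {\<one>\<^bsub>G\<^esub>} \<and>
     (\<forall>K. K \<lhd> G \<and> K \<subseteq> N \<longrightarrow> K = {\<one>\<^bsub>G\<^esub>} \<or> K = N)"

definition socle :: "('a, 'b) monoid_scheme \<Rightarrow> 'a set" where
  "socle G = generate G (\<Union>{N. minimal_normal G N})"

definition abelian_socle :: "('a, 'b) monoid_scheme \<Rightarrow> bool" where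
  "abelian_socle G \<longleftrightarrow> (\<forall>x\<in>socle G. \<forall>y\<in>socle G. x \<otimes>\<^bsub>G\<^esub> y = y \<otimes>\<^bsub>G\<^esub> x)"

definition typeA :: "('a, 'b) monoid_scheme \<Rightarrow> 'a set \<Rightarrow> bool" where
  "typeA G M \<longleftrightarrow> maximal_subgroup G M \<and> abelian_socle (G Mod (core G M))"

definition typeB :: "('a, 'b) monoid_scheme \<Rightarrow> 'a set \<Rightarrow> bool" where
  "typeB G M \<longleftrightarrow> maximal_subgroup G M \<and> \<not> abelian_socle (G Mod (core G M))"

definition mA :: "('a, 'b) monoid_scheme \<Rightarrow> nat \<Rightarrow> nat" where
  "mA G n = card {M. typeA G M \<and> card (rcosets\<^bsub>G\<^esub> M) = n}"

definition mB :: "('a, 'b) monoid_scheme \<Rightarrow> nat \<Rightarrow> nat" where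
  "mB G n = card {M. typeB G M \<and> card (rcosets\<^bsub>G\<^esub> M) = n}"

text \<open>mu*(G,t) = sum_{k>=t} sum_{n>=5} mB_n / n^k. Indices of subgroups are at most |G|,
  so the inner sum is the finite sum over 5 <= n <= |G|.\<close>
definition mu_star :: "('a, 'b) monoid_scheme \<Rightarrow> nat \<Rightarrow> real" where
  "mu_star G t = suminf (\<lambda>k. \<Sum>n\<in>{5..card (carrier G)}. real (mB G n) / real n ^ (k + t))"

text \<open>mu_p(G,t) = sum_{k>=t} sum_{n>=1} mA_{p^n} / p^{nk}; p^n \<le> |G| forces n \<le> |G|.\<close>
definition mu_p :: "('a, 'b) monoid_scheme \<Rightarrow> nat \<Rightarrow> nat \<Rightarrow> real" where
  "mu_p G p t = suminf (\<lambda>k. \<Sum>n\<in>{1..card (carrier G)}. real (mA G (p ^ n)) / real p ^ (n * (k + t)))"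

definition prime_divisors_order :: "('a, 'b) monoid_scheme \<Rightarrow> nat set" where
  "prime_divisors_order G = {p. Factorial_Ring.prime p \<and> p dvd card (carrier G)}"

end

theory Submission
  imports Defs
begin

definition lcomp :: "nat list \<Rightarrow> nat list \<Rightarrow> nat list" where
  "lcomp l m = map (\<lambda>i. l ! i) m"

definition lid :: "nat list" where "lid = [0,1,2,3]"

definition S4 :: "nat list list" where
  "S4 = [[a,b,c,d]. a \<leftarrow> [0..<4], b \<leftarrow> [0..<4], c \<leftarrow> [0..<4], d \<leftarrow> [0..<4], distinct [a,b,c,d]]"

definition linv :: "nat list \<Rightarrow> nat list" where
  "linv p = map (\<lambda>i. if p!0 = i then 0 else if p!1 = i then 1 else if p!2 = i then 2 else 3) [0,1,2,3]"

definition ninv :: "nat list \<Rightarrow> nat" where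
  "ninv p = length [(i,j). i \<leftarrow> [0..<4], j \<leftarrow> [0..<4], i < j, p!j < p!i]"

definition A4 :: "nat list list" where
  "A4 = filter (\<lambda>p. even (ninv p)) S4"

definition V4 :: "nat list list" where
  "V4 = [[0,1,2,3],[1,0,3,2],[2,3,0,1],[3,2,1,0]]"

definition I4 :: "nat list list" where "I4 = [lid]"

definition lcomm :: "nat list \<Rightarrow> nat list \<Rightarrow> nat list" where
  "lcomm p q = lcomp (lcomp (lcomp p q) (linv p)) (linv q)"

lemma C_id: "\<forall>p\<in>set S4. lcomp p p = p \<longrightarrow> p = lid"
  by code_simp

lemma C_inv: "\<forall>p\<in>set S4. linv p \<in> set S4 \<and> lcomp (linv p) p = lid"
  by code_simp

lemma C_inv_unique: "\<forall>p\<in>set S4. \<forall>q\<in>set S4. lcomp q p = lid \<longrightarrow> q = linv p"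
  by code_simp

lemma C_clos: "\<forall>L\<in>{S4, A4, V4, I4}. lid \<in> set L \<and> (\<forall>p\<in>set L. linv p \<in> set L \<and> (\<forall>q\<in>set L. lcomp p q \<in> set L))"
  by code_simp

lemma C_norm: "\<forall>L\<in>{A4, V4}. \<forall>p\<in>set S4. \<forall>q\<in>set L. lcomp (lcomp p q) (linv p) \<in> set L"
  by code_simp

lemma C_comm0: "\<forall>p\<in>set S4. \<forall>q\<in>set S4. lcomm p q \<in> set A4"
  by code_simp
lemma C_comm1: "\<forall>p\<in>set A4. \<forall>q\<in>set A4. lcomm p q \<in> set V4"
  by code_simp
lemma C_comm2: "\<forall>p\<in>set V4. \<forall>q\<in>set V4. lcomm p q = lid"
  by code_simp

context group begin

lemma inv_cancel_l [simp]: "x \<in> carrier G \<Longrightarrow> y \<in> carrier G \<Longrightarrow> inv x \<otimes> (x \<otimes> y) = y"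
  by (simp add: m_assoc[symmetric])
lemma inv_cancel_r [simp]: "x \<in> carrier G \<Longrightarrow> y \<in> carrier G \<Longrightarrow> x \<otimes> (inv x \<otimes> y) = y"
  by (simp add: m_assoc[symmetric])

lemmas gsimp = m_assoc inv_mult_group

lemma comm_from_commutator:
  assumes "x \<in> carrier G" "y \<in> carrier G" "x \<otimes> y \<otimes> inv x \<otimes> inv y = \<one>"
  shows "x \<otimes> y = y \<otimes> x"
proof -
  have "x \<otimes> y = (x \<otimes> y \<otimes> inv x \<otimes> inv y) \<otimes> (y \<otimes> x)"
    using assms(1,2) by (simp add: gsimp)
  then show ?thesis using assms by simp
qed

lemma gen_comm_elem:
  assumes A: "A \<subseteq> carrier G" and a: "a \<in> carrier G" and c: "\<forall>y\<in>A. a \<otimes> y = y \<otimes> a"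
  shows "y \<in> generate G A \<Longrightarrow> a \<otimes> y = y \<otimes> a"
proof (induction y rule: generate.induct)
  case one then show ?case using a by simp
next
  case (incl h) then show ?case using c by blast
next
  case (inv h)
  have h: "h \<in> carrier G" using inv A by blast
  have eq: "a \<otimes> h = h \<otimes> a" using c inv by blast
  have e1: "inv h \<otimes> (a \<otimes> h) \<otimes> inv h = inv h \<otimes> a" using h a by (simp add: m_assoc)
  have e2: "inv h \<otimes> (h \<otimes> a) \<otimes> inv h = a \<otimes> inv h" using h a by (simp add: m_assoc)
  show ?case using e1 e2 eq by simp
next
  case (eng h1 h2)
  have h1: "h1 \<in> carrier G" and h2: "h2 \<in> carrier G"
    using eng.hyps generate_incl[OF A] by blast+
  have "a \<otimes> (h1 \<otimes> h2) = (a \<otimes> h1) \<otimes> h2" using a h1 h2 by (simp add: m_assoc)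
  also have "\<dots> = (h1 \<otimes> a) \<otimes> h2" by (simp only: eng.IH(1))
  also have "\<dots> = h1 \<otimes> (a \<otimes> h2)" using a h1 h2 by (simp add: m_assoc)
  also have "\<dots> = h1 \<otimes> (h2 \<otimes> a)" by (simp only: eng.IH(2))
  also have "\<dots> = h1 \<otimes> h2 \<otimes> a" using a h1 h2 by (simp add: m_assoc)
  finally show ?case .
qed

lemma gen_comm:
  assumes A: "A \<subseteq> carrier G" and c: "\<forall>x\<in>A. \<forall>y\<in>A. x \<otimes> y = y \<otimes> x"
  shows "\<forall>x\<in>generate G A. \<forall>y\<in>generate G A. x \<otimes> y = y \<otimes> x"
proof (intro ballI)
  fix x y assume x: "x \<in> generate G A" and y: "y \<in> generate G A"
  have xc: "x \<in> carrier G" using x generate_incl[OF A] by blast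
  have "\<forall>a\<in>A. x \<otimes> a = a \<otimes> x"
  proof
    fix a assume a: "a \<in> A"
    have "a \<otimes> x = x \<otimes> a" using gen_comm_elem[OF A _ _ x] a A c by blast
    then show "x \<otimes> a = a \<otimes> x" by simp
  qed
  then show "x \<otimes> y = y \<otimes> x" using gen_comm_elem[OF A xc _ y] by blast
qed

lemma normal_conj_closed:
  assumes "N \<lhd> G" "g \<in> carrier G" "x \<in> N" shows "g \<otimes> x \<otimes> inv g \<in> N"
  using assms normal_inv_iff by blast

lemma minimal_normal_commute:
  assumes N1: "minimal_normal G N1" and N2: "minimal_normal G N2"
    and ab: "\<And>N. minimal_normal G N \<Longrightarrow> \<forall>x\<in>N. \<forall>y\<in>N. x \<otimes> y = y \<otimes> x"
    and x: "x \<in> N1" and y: "y \<in> N2"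
  shows "x \<otimes> y = y \<otimes> x"
proof (cases "N1 = N2")
  case True then show ?thesis using ab[OF N1] x y by blast
next
  case False
  have n1: "N1 \<lhd> G" and n2: "N2 \<lhd> G" using N1 N2 unfolding minimal_normal_def by auto
  have s1: "subgroup N1 G" and s2: "subgroup N2 G" using n1 n2 normal_imp_subgroup by auto
  have xc: "x \<in> carrier G" and yc: "y \<in> carrier G"
    using x y s1 s2 subgroup.subset by blast+
  have int: "N1 \<inter> N2 \<lhd> G" using normal_subgroup_intersect[OF n1 n2] .
  have m1: "\<And>K. K \<lhd> G \<Longrightarrow> K \<subseteq> N1 \<Longrightarrow> K = {\<one>} \<or> K = N1" using N1 unfolding minimal_normal_def by auto
  have m2: "\<And>K. K \<lhd> G \<Longrightarrow> K \<subseteq> N2 \<Longrightarrow> K = {\<one>} \<or> K = N2" using N2 unfolding minimal_normal_def by auto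
  have "N1 \<inter> N2 = {\<one>}"
  proof (rule ccontr)
    assume ne: "N1 \<inter> N2 \<noteq> {\<one>}"
    have a1: "N1 \<inter> N2 = N1" using m1[OF int] ne by auto
    have a2: "N1 \<inter> N2 = N2" using m2[OF int] ne by auto
    show False using False a1 a2 by simp
  qed
  moreover have "x \<otimes> y \<otimes> inv x \<otimes> inv y \<in> N1"
  proof -
    have "y \<otimes> inv x \<otimes> inv y \<in> N1"
      using normal_conj_closed[OF n1 yc subgroup.m_inv_closed[OF s1 x]] .
    then have "x \<otimes> (y \<otimes> inv x \<otimes> inv y) \<in> N1"
      using x subgroup.m_closed[OF s1] by blast
    then show ?thesis using xc yc by (simp add: m_assoc)
  qed
  moreover have "x \<otimes> y \<otimes> inv x \<otimes> inv y \<in> N2"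
  proof -
    have "x \<otimes> y \<otimes> inv x \<in> N2" using normal_conj_closed[OF n2 xc y] .
    then show ?thesis using subgroup.m_closed[OF s2] subgroup.m_inv_closed[OF s2 y] by blast
  qed
  ultimately show ?thesis using comm_from_commutator xc yc by blast
qed

lemma abelian_socle_from_minimal:
  assumes ab: "\<And>N. minimal_normal G N \<Longrightarrow> \<forall>x\<in>N. \<forall>y\<in>N. x \<otimes> y = y \<otimes> x"
  shows "abelian_socle G"
proof -
  let ?A = "\<Union>{N. minimal_normal G N}"
  have A: "?A \<subseteq> carrier G"
  proof
    fix x assume "x \<in> ?A"
    then obtain N where N: "minimal_normal G N" "x \<in> N" by blast
    then have "subgroup N G" unfolding minimal_normal_def using normal_imp_subgroup by auto
    then show "x \<in> carrier G" using N subgroup.subset by blast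
  qed
  have "\<forall>x\<in>?A. \<forall>y\<in>?A. x \<otimes> y = y \<otimes> x"
  proof (intro ballI)
    fix x y assume "x \<in> ?A" "y \<in> ?A"
    then obtain N1 N2 where "minimal_normal G N1" "x \<in> N1" "minimal_normal G N2" "y \<in> N2" by blast
    then show "x \<otimes> y = y \<otimes> x" using minimal_normal_commute[OF _ _ ab] by blast
  qed
  then show ?thesis
    unfolding abelian_socle_def socle_def using gen_comm[OF A] by blast
qed

end

context group begin

lemma core_char:
  assumes M: "subgroup M G"
  shows "core G M = {x \<in> carrier G. \<forall>g\<in>carrier G. inv g \<otimes> x \<otimes> g \<in> M}"
proof -
  have mem: "x \<in> (g <# M) #> inv g \<longleftrightarrow> x \<in> carrier G \<and> inv g \<otimes> x \<otimes> g \<in> M"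
    if g: "g \<in> carrier G" for g x
  proof
    assume "x \<in> (g <# M) #> inv g"
    then obtain m where m: "m \<in> M" "x = g \<otimes> m \<otimes> inv g"
      unfolding l_coset_def r_coset_def by auto
    have mc: "m \<in> carrier G" using m M subgroup.subset by blast
    show "x \<in> carrier G \<and> inv g \<otimes> x \<otimes> g \<in> M"
      using m mc g by (simp add: gsimp)
  next
    assume a: "x \<in> carrier G \<and> inv g \<otimes> x \<otimes> g \<in> M"
    have "x = g \<otimes> (inv g \<otimes> x \<otimes> g) \<otimes> inv g"
      using a g by (simp add: m_assoc)
    then show "x \<in> (g <# M) #> inv g"
      using a unfolding l_coset_def r_coset_def by blast
  qed
  show ?thesis
    unfolding core_def using mem by auto
qed

lemma core_subset: "subgroup M G \<Longrightarrow> core G M \<subseteq> M"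
  using core_char[of M] by (auto dest: bspec[where x=\<one>])

lemma core_normal:
  assumes M: "subgroup M G" shows "core G M \<lhd> G"
proof -
  have sub: "subgroup (core G M) G"
  proof
    show "core G M \<subseteq> carrier G" using core_char[OF M] by auto
    show "\<one> \<in> core G M" using core_char[OF M] subgroup.one_closed[OF M] by simp
    fix x y assume x: "x \<in> core G M" and y: "y \<in> core G M"
    show "x \<otimes> y \<in> core G M" unfolding core_char[OF M]
    proof (safe)
      show "x \<otimes> y \<in> carrier G" using x y core_char[OF M] by auto
      fix g assume g: "g \<in> carrier G"
      have xc: "x \<in> carrier G" and yc: "y \<in> carrier G" using x y core_char[OF M] by auto
      have "inv g \<otimes> (x \<otimes> y) \<otimes> g = (inv g \<otimes> x \<otimes> g) \<otimes> (inv g \<otimes> y \<otimes> g)"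
        using g xc yc by (simp add: gsimp)
      then show "inv g \<otimes> (x \<otimes> y) \<otimes> g \<in> M"
        using x y g core_char[OF M] subgroup.m_closed[OF M] by auto
    qed
    show "inv x \<in> core G M" unfolding core_char[OF M]
    proof (safe)
      show "inv x \<in> carrier G" using x core_char[OF M] by auto
      fix g assume g: "g \<in> carrier G"
      have xc: "x \<in> carrier G" using x core_char[OF M] by auto
      have "inv g \<otimes> inv x \<otimes> g = inv (inv g \<otimes> x \<otimes> g)"
        using g xc by (simp add: inv_mult_group m_assoc)
      then show "inv g \<otimes> inv x \<otimes> g \<in> M"
        using x g core_char[OF M] subgroup.m_inv_closed[OF M] by auto
    qed
  qed
  show ?thesis
  proof (rule normal_inv_iff[THEN iffD2], rule conjI[OF sub], safe)
    fix x h assume x: "x \<in> carrier G" and h: "h \<in> core G M"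
    have hc: "h \<in> carrier G" using h core_char[OF M] by auto
    show "x \<otimes> h \<otimes> inv x \<in> core G M" unfolding core_char[OF M]
    proof safe
      show "x \<otimes> h \<otimes> inv x \<in> carrier G" using x hc by simp
      fix g assume g: "g \<in> carrier G"
      have "inv g \<otimes> (x \<otimes> h \<otimes> inv x) \<otimes> g = inv (inv x \<otimes> g) \<otimes> h \<otimes> (inv x \<otimes> g)"
        using g x hc by (simp add: inv_mult_group m_assoc)
      then show "inv g \<otimes> (x \<otimes> h \<otimes> inv x) \<otimes> g \<in> M"
        using h g x core_char[OF M] by auto
    qed
  qed
qed

lemma normal_in_core:
  assumes M: "subgroup M G" and L: "L \<lhd> G" and LM: "L \<subseteq> M"
  shows "L \<subseteq> core G M"
proof
  fix x assume x: "x \<in> L"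
  have xc: "x \<in> carrier G" using x L normal_imp_subgroup subgroup.subset by blast
  show "x \<in> core G M" unfolding core_char[OF M]
  proof safe
    show "x \<in> carrier G" by fact
    fix g assume g: "g \<in> carrier G"
    have "inv g \<otimes> x \<otimes> inv (inv g) \<in> L"
      using L x g normal_inv_iff by blast
    then show "inv g \<otimes> x \<otimes> g \<in> M" using LM g by auto
  qed
qed


lemma exists_maximal:
  assumes fin: "finite (carrier G)" and H: "subgroup H G" and ne: "H \<noteq> carrier G"
  shows "\<exists>M. maximal_subgroup G M \<and> H \<subseteq> M"
proof -
  let ?A = "{K. subgroup K G \<and> K \<noteq> carrier G}"
  have fA: "finite ?A"
  proof (rule finite_subset[of _ "Pow (carrier G)"])
    show "?A \<subseteq> Pow (carrier G)" using subgroup.subset by blast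
  qed (use fin in auto)
  obtain M where M: "M \<in> ?A" "H \<subseteq> M" "\<forall>b\<in>?A. M \<subseteq> b \<longrightarrow> M = b"
    using finite_has_maximal2[OF fA, of H] H ne by auto
  have "maximal_subgroup G M"
    unfolding maximal_subgroup_def using M by blast
  then show ?thesis using M by blast
qed

lemma exists_minimal_normal:
  assumes fin: "finite (carrier G)" and nt: "carrier G \<noteq> {\<one>}"
  shows "\<exists>N. minimal_normal G N"
proof -
  let ?A = "{K. K \<lhd> G \<and> K \<noteq> {\<one>}}"
  have fA: "finite ?A"
  proof (rule finite_subset[of _ "Pow (carrier G)"])
    show "?A \<subseteq> Pow (carrier G)" using normal_imp_subgroup subgroup.subset by blast
  qed (use fin in auto)
  have cA: "carrier G \<in> ?A" using nt normal_self by auto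
  obtain N where N: "N \<in> ?A" "\<forall>b\<in>?A. b \<subseteq> N \<longrightarrow> N = b"
    using finite_has_minimal[OF fA] cA by blast
  have "minimal_normal G N"
    unfolding minimal_normal_def using N by blast
  then show ?thesis by blast
qed

lemma subgroup_nat_pow_closed:
  assumes "subgroup H G" "x \<in> H" shows "x [^] (n::nat) \<in> H"
proof (induction n)
  case 0 then show ?case using assms subgroup.one_closed by simp
next
  case (Suc n) then show ?case using assms subgroup.m_closed by simp
qed

lemma conj_pow:
  assumes g: "g \<in> carrier G" and z: "z \<in> carrier G"
  shows "(g \<otimes> z \<otimes> inv g) [^] (n::nat) = g \<otimes> z [^] n \<otimes> inv g"
proof (induction n)
  case 0 then show ?case using g by simp
next
  case (Suc n) then show ?case using g z by (simp add: m_assoc)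
qed

lemma abelian_minimal_normal_prime_power:
  assumes fin: "finite (carrier G)" and N: "minimal_normal G N"
    and ab: "\<forall>x\<in>N. \<forall>y\<in>N. x \<otimes> y = y \<otimes> x"
  shows "\<exists>p a. Factorial_Ring.prime p \<and> 0 < a \<and> card N = p ^ a"
proof -
  have n: "N \<lhd> G" using N unfolding minimal_normal_def by auto
  have s: "subgroup N G" using n normal_imp_subgroup by auto
  have Nsub: "N \<subseteq> carrier G" using s subgroup.subset by blast
  have nt: "N \<noteq> {\<one>}" using N unfolding minimal_normal_def by auto
  have m: "\<And>K. K \<lhd> G \<Longrightarrow> K \<subseteq> N \<Longrightarrow> K = {\<one>} \<or> K = N" using N unfolding minimal_normal_def by auto
  have finN: "finite N" using fin Nsub finite_subset by blast
  obtain x where x: "x \<in> N" "x \<noteq> \<one>" using nt subgroup.one_closed[OF s] by blast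
  have xc: "x \<in> carrier G" using x Nsub by blast
  have o1: "ord x \<ge> 1" using ord_ge_1[OF fin xc] .
  have o2: "ord x \<noteq> 1" using ord_eq_1[OF xc] x by simp
  obtain p where p: "Factorial_Ring.prime p" "p dvd ord x" using prime_factor_nat[OF o2] by blast
  define y where "y = x [^] (ord x div p)"
  have yN: "y \<in> N" unfolding y_def using subgroup_nat_pow_closed[OF s x(1)] .
  have yc: "y \<in> carrier G" using yN Nsub by blast
  have p0: "p > 1" using p prime_gt_1_nat by blast
  have y1: "y \<noteq> \<one>"
  proof
    assume "y = \<one>"
    then have "ord x dvd ord x div p" using pow_eq_id[OF xc] unfolding y_def by simp
    moreover have "0 < ord x div p" using p o1 p0 by (auto elim!: dvdE)
    moreover have "ord x div p < ord x" using p0 o1 by simp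
    ultimately show False using dvd_imp_le by fastforce
  qed
  have yp: "y [^] p = \<one>"
  proof -
    have "y [^] p = x [^] (ord x div p * p)" unfolding y_def using xc by (simp add: nat_pow_pow)
    also have "ord x div p * p = ord x" using p by simp
    finally show ?thesis using xc by simp
  qed
  define L where "L = {z \<in> N. z [^] p = \<one>}"
  have Lsub: "subgroup L G"
  proof (rule subgroupI)
    show "L \<subseteq> carrier G" unfolding L_def using Nsub by auto
    show "L \<noteq> {}" unfolding L_def using subgroup.one_closed[OF s] by auto
    fix a b assume a: "a \<in> L" and b: "b \<in> L"
    have ac: "a \<in> carrier G" and bc: "b \<in> carrier G" using a b Nsub unfolding L_def by auto
    show "inv a \<in> L" using a ac subgroup.m_inv_closed[OF s] unfolding L_def by (simp add: nat_pow_inv)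
    have "a \<otimes> b = b \<otimes> a" using ab a b unfolding L_def by auto
    then have "(a \<otimes> b) [^] p = a [^] p \<otimes> b [^] p" using pow_mult_distrib ac bc by blast
    then show "a \<otimes> b \<in> L" using a b subgroup.m_closed[OF s] unfolding L_def by auto
  qed
  have Ln: "L \<lhd> G"
  proof (rule normal_inv_iff[THEN iffD2], rule conjI[OF Lsub], intro ballI)
    fix g h assume g: "g \<in> carrier G" and h: "h \<in> L"
    have hc: "h \<in> carrier G" using h Nsub unfolding L_def by auto
    have "g \<otimes> h \<otimes> inv g \<in> N" using normal_conj_closed[OF n g] h unfolding L_def by auto
    moreover have "(g \<otimes> h \<otimes> inv g) [^] p = \<one>" using conj_pow[OF g hc] h g unfolding L_def by simp
    ultimately show "g \<otimes> h \<otimes> inv g \<in> L" unfolding L_def by auto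
  qed
  have "L \<noteq> {\<one>}" using yN yp y1 unfolding L_def by auto
  then have LN: "L = N" using m[OF Ln] unfolding L_def by auto
  have allp: "\<And>z. z \<in> N \<Longrightarrow> z [^] p = \<one>" using LN unfolding L_def by auto
  have pf: "q = p" if q: "q \<in> prime_factors (card N)" for q
  proof -
    have qp: "Factorial_Ring.prime q" "q dvd card N" using q by auto
    have gN: "group (G\<lparr>carrier := N\<rparr>)" using subgroup_imp_group[OF s] .
    obtain mm where mm: "card N = q ^ multiplicity q (card N) * mm"
      using multiplicity_dvd[of q "card N"] by (metis dvd_div_mult_self mult.commute)
    have ordN: "Coset.order (G\<lparr>carrier := N\<rparr>) = q ^ multiplicity q (card N) * mm"
      using mm unfolding Coset.order_def by simp
    obtain P where P: "subgroup P (G\<lparr>carrier := N\<rparr>)" "card P = q ^ multiplicity q (card N)"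
      using sylow_thm[OF qp(1) gN ordN] finN by auto
    have cN: "card N > 0" using finN subgroup.one_closed[OF s] card_gt_0_iff by blast
    have mpos: "multiplicity q (card N) > 0"
      using qp cN by (simp add: prime_multiplicity_gt_zero_iff)
    have "card P \<ge> 2"
    proof -
      have "q ^ multiplicity q (card N) \<ge> q ^ 1" using mpos qp(1) prime_gt_1_nat
        by (intro power_increasing) (auto simp: prime_gt_0_nat Suc_leI)
      then have "q \<le> card P" using P(2) by simp
      then show ?thesis using prime_ge_2_nat[OF qp(1)] by linarith
    qed
    have "\<not> P \<subseteq> {\<one>}"
    proof
      assume "P \<subseteq> {\<one>}"
      then have "card P \<le> card {\<one>}" by (rule card_mono[rotated]) simp
      then show False using \<open>card P \<ge> 2\<close> by simp
    qed
    then obtain z where z: "z \<in> P" "z \<noteq> \<one>" by blast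
    have PN: "P \<subseteq> N" using P(1) subgroup.subset by fastforce
    have zc: "z \<in> carrier G" using z PN Nsub by blast
    have "z [^]\<^bsub>G\<lparr>carrier := P\<rparr>\<^esub> Coset.order (G\<lparr>carrier := P\<rparr>) = \<one>\<^bsub>G\<lparr>carrier := P\<rparr>\<^esub>"
    proof -
      have gP: "group (G\<lparr>carrier := N\<rparr>\<lparr>carrier := P\<rparr>)"
        using group.subgroup_imp_group[OF gN P(1)] .
      have "z \<in> carrier (G\<lparr>carrier := N\<rparr>\<lparr>carrier := P\<rparr>)" using z by simp
      from group.pow_order_eq_1[OF gP this] show ?thesis by simp
    qed
    then have "z [^] card P = \<one>" by (simp add: Coset.order_def nat_pow_consistent[symmetric])
    then have d1: "ord z dvd q ^ multiplicity q (card N)" using pow_eq_id[OF zc] P(2) by simp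
    have "ord z dvd p" using pow_eq_id[OF zc] allp z PN by blast
    then have "ord z = p" using p(1) ord_eq_1[OF zc] z(2) by (metis prime_nat_iff)
    then have "p dvd q" using d1 prime_dvd_power p(1) by blast
    then show "q = p" using primes_dvd_imp_eq p(1) qp(1) by blast
  qed
  have cN: "card N \<noteq> 0" using finN subgroup.one_closed[OF s] by auto
  have cN1: "card N \<noteq> 1"
  proof
    assume "card N = 1"
    then obtain a where "N = {a}" using card_1_singletonE by blast
    then show False using nt subgroup.one_closed[OF s] by auto
  qed
  obtain q where q: "Factorial_Ring.prime q" "q dvd card N" using prime_factor_nat[OF cN1] by blast
  have qpf: "q \<in> prime_factors (card N)" using q cN by (simp add: prime_factors_dvd)
  then have qeq: "q = p" using pf by blast
  have PF: "prime_factors (card N) = {p}" using pf qpf qeq by blast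
  have "card N = (\<Prod>r\<in>prime_factors (card N). r ^ multiplicity r (card N))"
    using prod_prime_factors[OF cN] by simp
  also have "\<dots> = p ^ multiplicity p (card N)" using PF by simp
  finally have eq: "card N = p ^ multiplicity p (card N)" .
  have "multiplicity p (card N) > 0" using q qeq cN by (simp add: prime_multiplicity_gt_zero_iff)
  then show ?thesis using eq p(1) by blast
qed

end

context group begin

lemma maximal_subgroupD:
  assumes "maximal_subgroup G M"
  shows "subgroup M G" "M \<noteq> carrier G" "\<And>H. subgroup H G \<Longrightarrow> M \<subseteq> H \<Longrightarrow> H = M \<or> H = carrier G"
  using assms unfolding maximal_subgroup_def by auto

lemma quotient_facts:
  assumes C: "C \<lhd> G"
  shows "group (G Mod C)" "carrier (G Mod C) = rcosets C" "\<one>\<^bsub>G Mod C\<^esub> = C"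
    "group_hom G (G Mod C) (\<lambda>a. C #> a)"
proof -
  show g: "group (G Mod C)" using normal.factorgroup_is_group[OF C] .
  show "carrier (G Mod C) = rcosets C" "\<one>\<^bsub>G Mod C\<^esub> = C"
    unfolding FactGroup_def by auto
  show "group_hom G (G Mod C) (\<lambda>a. C #> a)"
    unfolding group_hom_def group_hom_axioms_def using g normal.r_coset_hom_Mod[OF C] is_group by auto
qed

lemma coset_eq_iff:
  assumes C: "subgroup C G" and x: "x \<in> carrier G" and y: "y \<in> carrier G"
  shows "C #> x = C #> y \<longleftrightarrow> x \<otimes> inv y \<in> C"
proof
  assume "C #> x = C #> y"
  then have "x \<in> C #> y" using rcos_self[OF x C] by simp
  then show "x \<otimes> inv y \<in> C" using subgroup.rcos_module_imp[OF C is_group y] by blast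
next
  assume "x \<otimes> inv y \<in> C"
  then have "x \<in> C #> y" using subgroup.rcos_module[OF C is_group y x] by blast
  then show "C #> x = C #> y" using repr_independence[OF _ y C] by simp
qed

lemma coset_one_iff:
  assumes C: "subgroup C G" and x: "x \<in> carrier G"
  shows "C #> x = C \<longleftrightarrow> x \<in> C"
  using coset_eq_iff[OF C x one_closed] x C by (simp add: subgroup.subset)

lemma typeA_index:
  assumes fin: "finite (carrier G)" and Mmax: "maximal_subgroup G M"
    and abs: "abelian_socle (G Mod core G M)"
  shows "\<exists>p a. Factorial_Ring.prime p \<and> 0 < a \<and> card (rcosets M) = p ^ a"
proof -
  note MD = maximal_subgroupD[OF Mmax]
  have Msub: "subgroup M G" using MD(1) .
  have Mc: "M \<subseteq> carrier G" using Msub subgroup.subset by blast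
  define C where "C = core G M"
  have Cn: "C \<lhd> G" unfolding C_def using core_normal[OF Msub] .
  have Cs: "subgroup C G" using Cn normal_imp_subgroup by blast
  have Cc: "C \<subseteq> carrier G" using Cs subgroup.subset by blast
  have CM: "C \<subseteq> M" unfolding C_def using core_subset[OF Msub] .
  define Q where "Q = G Mod C"
  note QF = quotient_facts[OF Cn, folded Q_def]
  interpret Q: group Q using QF(1) .
  interpret pi: group_hom G Q "\<lambda>a. C #> a" using QF(4) .
  have finQ: "finite (carrier Q)"
  proof -
    have "carrier Q \<subseteq> Pow (carrier G)" using QF(2) unfolding RCOSETS_def r_coset_def using Cc by auto
    then show ?thesis using fin finite_subset by blast
  qed
  obtain g where g: "g \<in> carrier G" "g \<notin> M" using MD(2) Mc by blast
  have ntQ: "carrier Q \<noteq> {\<one>\<^bsub>Q\<^esub>}"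
  proof
    assume a: "carrier Q = {\<one>\<^bsub>Q\<^esub>}"
    have "C #> g \<in> carrier Q" using g QF(2) rcosetsI Cc by blast
    then have "C #> g = C" using a QF(3) by auto
    then have "g \<in> C" using coset_one_iff[OF Cs g(1)] by simp
    then show False using g CM by blast
  qed
  obtain N where N: "minimal_normal Q N" using Q.exists_minimal_normal[OF finQ ntQ] by blast
  have Nn: "N \<lhd> Q" using N unfolding minimal_normal_def by auto
  have Ns: "subgroup N Q" using Nn normal_imp_subgroup by blast
  have NQ: "N \<subseteq> carrier Q" using Ns subgroup.subset by blast
  have Nnt: "N \<noteq> {\<one>\<^bsub>Q\<^esub>}" using N unfolding minimal_normal_def by auto
  have Nab: "\<forall>x\<in>N. \<forall>y\<in>N. x \<otimes>\<^bsub>Q\<^esub> y = y \<otimes>\<^bsub>Q\<^esub> x"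
  proof -
    have NS: "N \<subseteq> socle Q" unfolding socle_def
    proof
      fix x assume "x \<in> N"
      then have "x \<in> \<Union>{N. minimal_normal Q N}" using N by blast
      then show "x \<in> generate Q (\<Union>{N. minimal_normal Q N})" by (rule generate.incl)
    qed
    have abs': "abelian_socle Q" using abs unfolding Q_def C_def .
    show ?thesis
    proof (intro ballI)
      fix x y assume "x \<in> N" "y \<in> N"
      then have "x \<in> socle Q" "y \<in> socle Q" using NS by auto
      then show "x \<otimes>\<^bsub>Q\<^esub> y = y \<otimes>\<^bsub>Q\<^esub> x" using abs' unfolding abelian_socle_def by blast
    qed
  qed
  obtain p a where pa: "Factorial_Ring.prime p" "0 < a" "card N = p ^ a"
    using Q.abelian_minimal_normal_prime_power[OF finQ N Nab] by blast
  define K where "K = {x \<in> carrier G. C #> x \<in> N}"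
  have Kc: "K \<subseteq> carrier G" unfolding K_def by auto
  have Ks: "subgroup K G"
  proof (rule subgroupI)
    show "K \<subseteq> carrier G" by (fact Kc)
    show "K \<noteq> {}" using subgroup.one_closed[OF Ns] QF(3) Cc unfolding K_def by force
    fix a b assume a: "a \<in> K" and b: "b \<in> K"
    show "inv a \<in> K" using a pi.hom_inv subgroup.m_inv_closed[OF Ns] unfolding K_def by auto
    show "a \<otimes> b \<in> K" using a b pi.hom_mult subgroup.m_closed[OF Ns] unfolding K_def by auto
  qed
  have Kn: "K \<lhd> G"
  proof (rule normal_inv_iff[THEN iffD2], rule conjI[OF Ks], intro ballI)
    fix x h assume x: "x \<in> carrier G" and h: "h \<in> K"
    have hc: "h \<in> carrier G" using h Kc by blast
    have "C #> (x \<otimes> h \<otimes> inv x) = (C #> x) \<otimes>\<^bsub>Q\<^esub> (C #> h) \<otimes>\<^bsub>Q\<^esub> inv\<^bsub>Q\<^esub> (C #> x)"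
      using x hc by (simp add: pi.hom_mult pi.hom_inv)
    also have "\<dots> \<in> N" using Q.normal_conj_closed[OF Nn] x h unfolding K_def by auto
    finally show "x \<otimes> h \<otimes> inv x \<in> K" using x hc unfolding K_def by auto
  qed
  have CK: "C \<subseteq> K"
  proof
    fix c assume c: "c \<in> C"
    have "C #> c = C" using coset_one_iff[OF Cs] c Cc by blast
    then show "c \<in> K" using c Cc subgroup.one_closed[OF Ns] QF(3) unfolding K_def by auto
  qed
  have comm: "x \<otimes> y \<otimes> inv x \<otimes> inv y \<in> C" if x: "x \<in> K" and y: "y \<in> K" for x y
  proof -
    have xc: "x \<in> carrier G" and yc: "y \<in> carrier G" using x y Kc by auto
    have "C #> (x \<otimes> y \<otimes> inv x \<otimes> inv y)
        = (C #> x) \<otimes>\<^bsub>Q\<^esub> (C #> y) \<otimes>\<^bsub>Q\<^esub> inv\<^bsub>Q\<^esub> (C #> x) \<otimes>\<^bsub>Q\<^esub> inv\<^bsub>Q\<^esub> (C #> y)"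
      using xc yc by (simp add: pi.hom_mult pi.hom_inv)
    also have "\<dots> = \<one>\<^bsub>Q\<^esub>"
    proof -
      have ax: "C #> x \<in> carrier Q" and ay: "C #> y \<in> carrier Q" using xc yc by auto
      have "(C #> x) \<otimes>\<^bsub>Q\<^esub> (C #> y) = (C #> y) \<otimes>\<^bsub>Q\<^esub> (C #> x)"
        using Nab x y unfolding K_def by auto
      then show ?thesis using ax ay by (simp add: Q.m_assoc)
    qed
    finally have e: "C #> (x \<otimes> y \<otimes> inv x \<otimes> inv y) = C" using QF(3) by simp
    have cx: "x \<otimes> y \<otimes> inv x \<otimes> inv y \<in> carrier G" using xc yc by simp
    show ?thesis using coset_one_iff[OF Cs cx] e by blast
  qed
  have KM: "\<not> K \<subseteq> M"
  proof
    assume "K \<subseteq> M"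
    then have KC: "K \<subseteq> C" unfolding C_def using normal_in_core[OF Msub Kn] by simp
    have "N \<subseteq> {\<one>\<^bsub>Q\<^esub>}"
    proof
      fix XX assume XX: "XX \<in> N"
      then have "XX \<in> rcosets C" using NQ QF(2) by auto
      then obtain h where h: "h \<in> carrier G" "XX = C #> h" unfolding RCOSETS_def by auto
      then have "h \<in> K" using XX unfolding K_def by auto
      then have "h \<in> C" using KC by auto
      then show "XX \<in> {\<one>\<^bsub>Q\<^esub>}" using h coset_one_iff[OF Cs] QF(3) by simp
    qed
    then show False using Nnt subgroup.one_closed[OF Ns] by auto
  qed
  have KMs: "subgroup (K <#> M) G"
  proof -
    have "second_isomorphism_grp K G M"
      unfolding second_isomorphism_grp_def second_isomorphism_grp_axioms_def using Kn Msub by simp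
    then show ?thesis using second_isomorphism_grp.normal_set_mult_subgroup by blast
  qed
  have KMall: "K <#> M = carrier G"
  proof -
    have "M \<subseteq> K <#> M"
    proof
      fix m assume "m \<in> M"
      then have "\<one> \<otimes> m \<in> K <#> M" using subgroup.one_closed[OF Ks] unfolding set_mult_def by blast
      then show "m \<in> K <#> M" using \<open>m \<in> M\<close> Mc by auto
    qed
    moreover have "K <#> M \<noteq> M"
    proof
      assume e: "K <#> M = M"
      have "K \<subseteq> K <#> M"
      proof
        fix k assume "k \<in> K"
        then have "k \<otimes> \<one> \<in> K <#> M" using subgroup.one_closed[OF Msub] unfolding set_mult_def by blast
        then show "k \<in> K <#> M" using \<open>k \<in> K\<close> Kc by auto
      qed
      then show False using e KM by simp
    qed
    ultimately show ?thesis using MD(3)[OF KMs] by blast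
  qed
  have MKC: "M \<inter> K = C"
  proof
    show "C \<subseteq> M \<inter> K" using CM CK by auto
    have MKn: "M \<inter> K \<lhd> G"
    proof (rule normal_inv_iff[THEN iffD2], rule conjI[OF subgroups_Inter_pair[OF Msub Ks]], intro ballI)
      fix g x assume g: "g \<in> carrier G" and x: "x \<in> M \<inter> K"
      have xc: "x \<in> carrier G" using x Mc by auto
      have "g \<in> K <#> M" using g KMall by simp
      then obtain k m where km: "k \<in> K" "m \<in> M" "g = k \<otimes> m" unfolding set_mult_def by blast
      have kc: "k \<in> carrier G" and mc: "m \<in> carrier G" using km Kc Mc by auto
      define y where "y = m \<otimes> x \<otimes> inv m"
      have yK: "y \<in> K" unfolding y_def using normal_conj_closed[OF Kn mc] x by auto
      have yM: "y \<in> M" unfolding y_def using x km(2) subgroup.m_closed[OF Msub] subgroup.m_inv_closed[OF Msub] by auto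
      have yc: "y \<in> carrier G" using yK Kc by auto
      have e1: "g \<otimes> x \<otimes> inv g = k \<otimes> y \<otimes> inv k"
        unfolding y_def km(3) using kc mc xc by (simp add: m_assoc inv_mult_group)
      have c1: "inv y \<otimes> k \<otimes> inv (inv y) \<otimes> inv k \<in> C"
        using comm[OF subgroup.m_inv_closed[OF Ks yK] km(1)] .
      have e2: "k \<otimes> y \<otimes> inv k = y \<otimes> (inv y \<otimes> k \<otimes> inv (inv y) \<otimes> inv k)"
        using kc yc by (simp add: m_assoc)
      have "k \<otimes> y \<otimes> inv k \<in> M" unfolding e2 using yM c1 CM subgroup.m_closed[OF Msub] by blast
      moreover have "k \<otimes> y \<otimes> inv k \<in> K" using normal_conj_closed[OF Kn kc yK] .
      ultimately show "g \<otimes> x \<otimes> inv g \<in> M \<inter> K" using e1 by simp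
    qed
    show "M \<inter> K \<subseteq> C" unfolding C_def using normal_in_core[OF Msub MKn] by blast
  qed
  have MC: "M <#> C = M"
  proof
    show "M <#> C \<subseteq> M" unfolding set_mult_def using CM subgroup.m_closed[OF Msub] by blast
    show "M \<subseteq> M <#> C"
    proof
      fix m assume "m \<in> M"
      then have "m \<otimes> \<one> \<in> M <#> C" using subgroup.one_closed[OF Cs] unfolding set_mult_def by blast
      then show "m \<in> M <#> C" using \<open>m \<in> M\<close> Mc by auto
    qed
  qed
  have fC: "M <#> (C #> k) = M #> k" if "k \<in> carrier G" for k
    using setmult_rcos_assoc[OF Mc Cc that] MC by simp
  have NK: "N = (\<lambda>k. C #> k) ` K"
  proof
    show "(\<lambda>k. C #> k) ` K \<subseteq> N" unfolding K_def by auto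
    show "N \<subseteq> (\<lambda>k. C #> k) ` K"
    proof
      fix XX assume XX: "XX \<in> N"
      then have "XX \<in> rcosets C" using NQ QF(2) by auto
      then obtain h where h: "h \<in> carrier G" "XX = C #> h" unfolding RCOSETS_def by auto
      then show "XX \<in> (\<lambda>k. C #> k) ` K" using XX unfolding K_def by auto
    qed
  qed
  have bij: "bij_betw (\<lambda>XX. M <#> XX) N (rcosets M)"
  proof (rule bij_betw_imageI)
    show "inj_on (\<lambda>XX. M <#> XX) N"
    proof (rule inj_onI)
      fix XX YY assume XX: "XX \<in> N" and YY: "YY \<in> N" and e: "M <#> XX = M <#> YY"
      obtain a where a: "a \<in> K" "XX = C #> a" using XX NK by auto
      obtain b where b: "b \<in> K" "YY = C #> b" using YY NK by auto
      have ac: "a \<in> carrier G" and bc: "b \<in> carrier G" using a b Kc by auto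
      have "M #> a = M #> b" using e fC ac bc a b by simp
      then have "a \<otimes> inv b \<in> M" using coset_eq_iff[OF Msub ac bc] by simp
      moreover have "a \<otimes> inv b \<in> K" using a b subgroup.m_closed[OF Ks] subgroup.m_inv_closed[OF Ks] by blast
      ultimately have "a \<otimes> inv b \<in> C" using MKC by blast
      then show "XX = YY" using coset_eq_iff[OF Cs ac bc] a b by simp
    qed
    show "(\<lambda>XX. M <#> XX) ` N = rcosets M"
    proof
      show "(\<lambda>XX. M <#> XX) ` N \<subseteq> rcosets M"
      proof
        fix YY assume "YY \<in> (\<lambda>XX. M <#> XX) ` N"
        then obtain k where k: "k \<in> K" "YY = M <#> (C #> k)" using NK by auto
        then show "YY \<in> rcosets M" using fC Kc rcosetsI Mc by auto
      qed
      show "rcosets M \<subseteq> (\<lambda>XX. M <#> XX) ` N"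
      proof
        fix YY assume "YY \<in> rcosets M"
        then obtain g where g: "g \<in> carrier G" "YY = M #> g" unfolding RCOSETS_def by auto
        obtain k m where km: "k \<in> K" "m \<in> M" "inv g = k \<otimes> m"
          using g KMall inv_closed unfolding set_mult_def by blast
        have kc: "k \<in> carrier G" and mc: "m \<in> carrier G" using km Kc Mc by auto
        have ge: "g = inv m \<otimes> inv k" using km kc mc g
          by (metis inv_inv inv_mult_group)
        have "M #> g = (M #> inv m) #> inv k" using ge coset_mult_assoc Mc kc mc by simp
        also have "M #> inv m = M" using subgroup.rcos_const[OF Msub is_group] km(2) subgroup.m_inv_closed[OF Msub] by blast
        finally have e1: "YY = M #> inv k" using g by simp
        have e2: "M <#> (C #> inv k) = M #> inv k" using fC[of "inv k"] kc by blast
        have "YY = M <#> (C #> inv k)" using e1 e2 by simp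
        moreover have "C #> inv k \<in> N" using NK km(1) subgroup.m_inv_closed[OF Ks] by auto
        ultimately show "YY \<in> (\<lambda>XX. M <#> XX) ` N" by blast
      qed
    qed
  qed
  then have "card (rcosets M) = card N" using bij_betw_same_card by fastforce
  then show ?thesis using pa by auto
qed

end

lemma clos_L: "L \<in> {S4, A4, V4, I4} \<Longrightarrow> lid \<in> set L \<and> (\<forall>p\<in>set L. linv p \<in> set L \<and> (\<forall>q\<in>set L. lcomp p q \<in> set L))"
  using C_clos by blast
lemma norm_L: "L \<in> {A4, V4} \<Longrightarrow> p \<in> set S4 \<Longrightarrow> q \<in> set L \<Longrightarrow> lcomp (lcomp p q) (linv p) \<in> set L"
  using C_norm by blast
lemma A4_sub: "set A4 \<subseteq> set S4" unfolding A4_def by auto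
lemma V4_sub: "set V4 \<subseteq> set S4" by code_simp

context group begin

lemma perm_rep_abelian_socle:
  assumes hom: "\<And>x y. x \<in> carrier G \<Longrightarrow> y \<in> carrier G \<Longrightarrow> \<rho> (x \<otimes> y) = lcomp (\<rho> x) (\<rho> y)"
    and inS4: "\<And>x. x \<in> carrier G \<Longrightarrow> \<rho> x \<in> set S4"
    and ker: "\<And>x. x \<in> carrier G \<Longrightarrow> \<rho> x = lid \<Longrightarrow> x = \<one>"
  shows "abelian_socle G"
proof -
  have r1: "\<rho> \<one> = lid"
    using C_id inS4[OF one_closed] hom[OF one_closed one_closed] by simp
  have rinv: "\<rho> (inv x) = linv (\<rho> x)" if x: "x \<in> carrier G" for x
  proof -
    have "lcomp (\<rho> (inv x)) (\<rho> x) = lid" using hom[of "inv x" x] x r1 by simp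
    then show ?thesis using C_inv_unique inS4 x by simp
  qed
  have rcomm: "\<rho> (x \<otimes> y \<otimes> inv x \<otimes> inv y) = lcomm (\<rho> x) (\<rho> y)"
    if "x \<in> carrier G" "y \<in> carrier G" for x y
    using that by (simp add: hom rinv lcomm_def)
  define S where "S L = {x \<in> carrier G. \<rho> x \<in> set L}" for L
  have Snormal: "S L \<lhd> G" if L: "L \<in> {A4, V4}" for L
  proof -
    have cl: "lid \<in> set L \<and> (\<forall>p\<in>set L. linv p \<in> set L \<and> (\<forall>q\<in>set L. lcomp p q \<in> set L))"
      using clos_L L by blast
    have sub: "subgroup (S L) G"
    proof (rule subgroupI)
      show "S L \<subseteq> carrier G" unfolding S_def by auto
      show "S L \<noteq> {}" using r1 cl unfolding S_def by auto
      fix a b assume a: "a \<in> S L" and b: "b \<in> S L"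
      show "inv a \<in> S L" using a cl rinv unfolding S_def by auto
      show "a \<otimes> b \<in> S L" using a b cl hom unfolding S_def by auto
    qed
    show ?thesis
    proof (rule normal_inv_iff[THEN iffD2], rule conjI[OF sub], intro ballI)
      fix g h assume g: "g \<in> carrier G" and h: "h \<in> S L"
      have hc: "h \<in> carrier G" using h unfolding S_def by auto
      have "\<rho> (g \<otimes> h \<otimes> inv g) = lcomp (lcomp (\<rho> g) (\<rho> h)) (linv (\<rho> g))"
        using g hc by (simp add: hom rinv)
      moreover have "lcomp (lcomp (\<rho> g) (\<rho> h)) (linv (\<rho> g)) \<in> set L"
        using norm_L[OF L inS4[OF g]] h unfolding S_def by auto
      ultimately show "g \<otimes> h \<otimes> inv g \<in> S L" using g hc unfolding S_def by auto
    qed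
  qed
  have step: "(\<forall>x\<in>N. \<forall>y\<in>N. x \<otimes> y = y \<otimes> x) \<or> (\<forall>x\<in>N. \<rho> x \<in> set L2)"
    if N: "minimal_normal G N" and L2: "L2 \<in> {A4, V4}" and NL1: "\<forall>x\<in>N. \<rho> x \<in> set L1"
      and cm: "\<forall>p\<in>set L1. \<forall>q\<in>set L1. lcomm p q \<in> set L2" for N L1 L2
  proof -
    have n: "N \<lhd> G" using N unfolding minimal_normal_def by auto
    have s: "subgroup N G" using n normal_imp_subgroup by auto
    have D: "N \<inter> S L2 \<lhd> G" using normal_subgroup_intersect[OF n Snormal[OF L2]] .
    have m: "\<And>K. K \<lhd> G \<Longrightarrow> K \<subseteq> N \<Longrightarrow> K = {\<one>} \<or> K = N" using N unfolding minimal_normal_def by auto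
    have "N \<inter> S L2 = {\<one>} \<or> N \<inter> S L2 = N" using m[OF D] by auto
    then show ?thesis
    proof
      assume D1: "N \<inter> S L2 = {\<one>}"
      have "\<forall>x\<in>N. \<forall>y\<in>N. x \<otimes> y = y \<otimes> x"
      proof (intro ballI)
        fix x y assume x: "x \<in> N" and y: "y \<in> N"
        have xc: "x \<in> carrier G" and yc: "y \<in> carrier G" using x y s subgroup.subset by blast+
        have "x \<otimes> y \<otimes> inv x \<in> N" using normal_conj_closed[OF n xc y] .
        then have cN: "x \<otimes> y \<otimes> inv x \<otimes> inv y \<in> N"
          using subgroup.m_closed[OF s] subgroup.m_inv_closed[OF s y] by blast
        have "\<rho> (x \<otimes> y \<otimes> inv x \<otimes> inv y) \<in> set L2"
          using rcomm[OF xc yc] cm NL1 x y by auto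
        then have "x \<otimes> y \<otimes> inv x \<otimes> inv y \<in> N \<inter> S L2" using cN xc yc unfolding S_def by auto
        then show "x \<otimes> y = y \<otimes> x" using D1 comm_from_commutator[OF xc yc] by auto
      qed
      then show ?thesis by blast
    next
      assume "N \<inter> S L2 = N"
      then show ?thesis unfolding S_def by auto
    qed
  qed
  have ab: "\<forall>x\<in>N. \<forall>y\<in>N. x \<otimes> y = y \<otimes> x" if N: "minimal_normal G N" for N
  proof -
    have n: "N \<lhd> G" using N unfolding minimal_normal_def by auto
    have s: "subgroup N G" using n normal_imp_subgroup by auto
    have N0: "\<forall>x\<in>N. \<rho> x \<in> set S4" using inS4 s subgroup.subset by blast
    have c0: "\<forall>p\<in>set S4. \<forall>q\<in>set S4. lcomm p q \<in> set A4" using C_comm0 .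
    have c1: "\<forall>p\<in>set A4. \<forall>q\<in>set A4. lcomm p q \<in> set V4" using C_comm1 .
    show ?thesis
    proof (cases "\<forall>x\<in>N. \<forall>y\<in>N. x \<otimes> y = y \<otimes> x")
      case True then show ?thesis .
    next
      case False
      then have NA: "\<forall>x\<in>N. \<rho> x \<in> set A4" using step[OF N _ N0 c0] by blast
      then have NV: "\<forall>x\<in>N. \<rho> x \<in> set V4" using step[OF N _ NA c1] False by blast
      show ?thesis
      proof (intro ballI)
        fix x y assume x: "x \<in> N" and y: "y \<in> N"
        have xc: "x \<in> carrier G" and yc: "y \<in> carrier G" using x y s subgroup.subset by blast+
        have "\<rho> (x \<otimes> y \<otimes> inv x \<otimes> inv y) = lid"
          using rcomm[OF xc yc] C_comm2 NV x y by auto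
        then have "x \<otimes> y \<otimes> inv x \<otimes> inv y = \<one>" using ker xc yc by simp
        then show "x \<otimes> y = y \<otimes> x" using comm_from_commutator[OF xc yc] by blast
      qed
    qed
  qed
  show ?thesis using abelian_socle_from_minimal ab by blast
qed

end

lemma S4_mem:
  assumes "length l = 4" "distinct l" "\<forall>x\<in>set l. x < 4"
  shows "l \<in> set S4"
proof -
  obtain a b c d where l: "l = [a,b,c,d]" using assms(1)
    by (auto simp: length_Suc_conv numeral_eq_Suc)
  have "a < 4" "b < 4" "c < 4" "d < 4" using assms(3) unfolding l by auto
  then show ?thesis using assms(2) unfolding l S4_def by (auto simp: set_concat)
qed

lemma lcomp_nth: "i < length m \<Longrightarrow> lcomp l m ! i = l ! (m ! i)"
  unfolding lcomp_def by simp

lemma map4_nth: "i < 4 \<Longrightarrow> map f [0,1,2,(3::nat)] ! i = f i"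
proof -
  assume "i < 4"
  then have "i = 0 \<or> i = 1 \<or> i = 2 \<or> i = 3" by arith
  then show ?thesis by auto
qed

lemma lid_nth: "i < 4 \<Longrightarrow> lid ! i = i"
  using map4_nth[of i id] unfolding lid_def by simp

context group begin

lemma rcosets_sub: "subgroup M G \<Longrightarrow> YY \<in> rcosets M \<Longrightarrow> YY \<subseteq> carrier G"
  unfolding RCOSETS_def r_coset_def using subgroup.subset by fastforce

lemma rcosets_act:
  assumes M: "subgroup M G" and YY: "YY \<in> rcosets M" and g: "g \<in> carrier G"
  shows "YY #> g \<in> rcosets M"
proof -
  obtain a where a: "a \<in> carrier G" "YY = M #> a" using YY unfolding RCOSETS_def by auto
  have "YY #> g = M #> (a \<otimes> g)" using a g coset_mult_assoc M subgroup.subset by blast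
  then show ?thesis using a g rcosetsI M subgroup.subset by (metis m_closed)
qed

lemma rcosets_act_inv:
  assumes M: "subgroup M G" and YY: "YY \<in> rcosets M" and g: "g \<in> carrier G"
  shows "YY #> g #> inv g = YY"
  using coset_mult_assoc[OF rcosets_sub[OF M YY] g inv_closed[OF g]] g rcosets_sub[OF M YY] by simp

lemma rcosets_core_fix:
  assumes M: "subgroup M G" and YY: "YY \<in> rcosets M" and c: "c \<in> core G M"
  shows "YY #> c = YY"
proof -
  obtain a where a: "a \<in> carrier G" "YY = M #> a" using YY unfolding RCOSETS_def by auto
  have cc: "c \<in> carrier G" using c core_char[OF M] by auto
  have "\<forall>g\<in>carrier G. inv g \<otimes> c \<otimes> g \<in> M" using c core_char[OF M] by auto
  then have "inv (inv a) \<otimes> c \<otimes> inv a \<in> M" using a inv_closed by blast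
  then have "a \<otimes> c \<otimes> inv a \<in> M" using a by simp
  then have "M #> (a \<otimes> c) = M #> a" using coset_eq_iff[OF M _ a(1)] a cc by simp
  then show ?thesis using a coset_mult_assoc M subgroup.subset cc by metis
qed

lemma typeB_small:
  assumes fin: "finite (carrier G)" and Mmax: "maximal_subgroup G M"
    and small: "card (rcosets M) \<le> 4"
  shows "abelian_socle (G Mod core G M)"
proof -
  note MD = maximal_subgroupD[OF Mmax]
  have Msub: "subgroup M G" using MD(1) .
  have Mc: "M \<subseteq> carrier G" using Msub subgroup.subset by blast
  define C where "C = core G M"
  have Cn: "C \<lhd> G" unfolding C_def using core_normal[OF Msub] .
  have Cs: "subgroup C G" using Cn normal_imp_subgroup by blast
  have Cc: "C \<subseteq> carrier G" using Cs subgroup.subset by blast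
  define Q where "Q = G Mod C"
  note QF = quotient_facts[OF Cn, folded Q_def]
  interpret Q: group Q using QF(1) .
  interpret pi: group_hom G Q "\<lambda>a. C #> a" using QF(4) .
  define R where "R = rcosets M"
  define n where "n = card R"
  have finR: "finite R"
  proof -
    have "R \<subseteq> Pow (carrier G)" using rcosets_sub[OF Msub] unfolding R_def by auto
    then show ?thesis using fin finite_subset by blast
  qed
  have n4: "n \<le> 4" using small unfolding n_def R_def .
  obtain e where e: "bij_betw e {0..<n} R" using ex_bij_betw_nat_finite[OF finR] unfolding n_def by blast
  define idx where "idx YY = inv_into {0..<n} e YY" for YY
  have idx_lt: "idx YY < n" if "YY \<in> R" for YY
    using inv_into_into[of YY e "{0..<n}"] that e unfolding idx_def bij_betw_def by auto
  have e_idx: "e (idx YY) = YY" if "YY \<in> R" for YY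
    using bij_betw_inv_into_right[OF e that] unfolding idx_def .
  have idx_e: "idx (e i) = i" if "i < n" for i
    using bij_betw_inv_into_left[OF e] that unfolding idx_def by simp
  have eR: "e i \<in> R" if "i < n" for i using e that unfolding bij_betw_def by auto
  define f where "f g i = (if i < n then idx (e i #> inv g) else i)" for g i
  define rho where "rho g = map (f g) [0,1,2,3]" for g
  have f_lt: "f g i < 4" if "g \<in> carrier G" "i < 4" for g i
  proof (cases "i < n")
    case True
    have "e i #> inv g \<in> R" using rcosets_act[OF Msub] eR[OF True] that(1) unfolding R_def by auto
    then show ?thesis using idx_lt n4 True unfolding f_def by fastforce
  qed (use that in \<open>auto simp: f_def\<close>)
  have f_hom: "f (g \<otimes> h) i = f g (f h i)" if g: "g \<in> carrier G" and h: "h \<in> carrier G" for g h i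
  proof (cases "i < n")
    case True
    have Z: "e i #> inv h \<in> R" using rcosets_act[OF Msub] eR[OF True] h unfolding R_def by auto
    have "e i #> inv (g \<otimes> h) = (e i #> inv h) #> inv g"
      using coset_mult_assoc[OF rcosets_sub[OF Msub eR[OF True, unfolded R_def]] inv_closed[OF h] inv_closed[OF g]]
        g h by (simp add: inv_mult_group)
    also have "\<dots> = e (idx (e i #> inv h)) #> inv g" using e_idx[OF Z] by simp
    finally show ?thesis using True idx_lt[OF Z] unfolding f_def by simp
  qed (simp add: f_def)
  have rho_hom: "rho (g \<otimes> h) = lcomp (rho g) (rho h)" if g: "g \<in> carrier G" and h: "h \<in> carrier G" for g h
  proof (rule nth_equalityI)
    show "length (rho (g \<otimes> h)) = length (lcomp (rho g) (rho h))" unfolding rho_def lcomp_def by simp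
    fix i assume "i < length (rho (g \<otimes> h))"
    then have i: "i < 4" unfolding rho_def by simp
    have "rho (g \<otimes> h) ! i = f (g \<otimes> h) i" unfolding rho_def by (rule map4_nth[OF i])
    also have "\<dots> = f g (f h i)" using f_hom[OF g h] .
    also have "\<dots> = rho g ! (rho h ! i)"
    proof -
      have "rho h ! i = f h i" unfolding rho_def by (rule map4_nth[OF i])
      moreover have "rho g ! (f h i) = f g (f h i)" unfolding rho_def by (rule map4_nth[OF f_lt[OF h i]])
      ultimately show ?thesis by simp
    qed
    also have "\<dots> = lcomp (rho g) (rho h) ! i" using i unfolding rho_def by (simp add: lcomp_nth)
    finally show "rho (g \<otimes> h) ! i = lcomp (rho g) (rho h) ! i" .
  qed
  have rho_S4: "rho g \<in> set S4" if g: "g \<in> carrier G" for g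
  proof (rule S4_mem)
    show "length (rho g) = 4" unfolding rho_def by simp
    show "\<forall>x\<in>set (rho g). x < 4" unfolding rho_def using f_lt[OF g] by auto
    have inj: "inj_on (f g) {0..<4}"
    proof (rule inj_onI)
      fix i j assume i: "i \<in> {0..<4}" and j: "j \<in> {0..<4}" and eq: "f g i = f g j"
      show "i = j"
      proof (cases "i < n"; cases "j < n")
        assume in_: "i < n" and jn: "j < n"
        have Zi: "e i #> inv g \<in> R" using rcosets_act[OF Msub] eR[OF in_] g unfolding R_def by auto
        have Zj: "e j #> inv g \<in> R" using rcosets_act[OF Msub] eR[OF jn] g unfolding R_def by auto
        have "e i #> inv g = e j #> inv g" using eq in_ jn e_idx[OF Zi] e_idx[OF Zj] unfolding f_def by metis
        then have "e i #> inv g #> inv (inv g) = e j #> inv g #> inv (inv g)" by simp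
        then have "e i = e j" using rcosets_act_inv[OF Msub _ inv_closed[OF g]] eR in_ jn unfolding R_def by simp
        then show "i = j" using idx_e in_ jn by metis
      next
        assume in_: "i < n" and jn: "\<not> j < n"
        have Zi: "e i #> inv g \<in> R" using rcosets_act[OF Msub] eR[OF in_] g unfolding R_def by auto
        have "f g i < n" using idx_lt[OF Zi] in_ unfolding f_def by simp
        moreover have "f g j = j" using jn unfolding f_def by simp
        ultimately show "i = j" using eq jn by simp
      next
        assume in_: "\<not> i < n" and jn: "j < n"
        have Zj: "e j #> inv g \<in> R" using rcosets_act[OF Msub] eR[OF jn] g unfolding R_def by auto
        have "f g j < n" using idx_lt[OF Zj] jn unfolding f_def by simp
        moreover have "f g i = i" using in_ unfolding f_def by simp
        ultimately show "i = j" using eq in_ by simp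
      next
        assume "\<not> i < n" "\<not> j < n"
        then show "i = j" using eq unfolding f_def by simp
      qed
    qed
    have "distinct (map (f g) [0..<4])" using inj by (simp add: distinct_map)
    moreover have "[0..<4] = [0,1,2,(3::nat)]" by code_simp
    ultimately show "distinct (rho g)" unfolding rho_def by simp
  qed
  have rho_ker: "g \<in> C" if g: "g \<in> carrier G" and r: "rho g = lid" for g
  proof -
    have fix1: "YY #> inv g = YY" if YY: "YY \<in> R" for YY
    proof -
      have i: "idx YY < n" using idx_lt[OF YY] .
      have i4: "idx YY < 4" using i n4 by simp
      have "f g (idx YY) = rho g ! (idx YY)" unfolding rho_def by (rule map4_nth[OF i4, symmetric])
      also have "\<dots> = idx YY" using r i4 lid_nth by simp
      finally have "idx (e (idx YY) #> inv g) = idx YY" using i unfolding f_def by simp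
      then have "idx (YY #> inv g) = idx YY" using e_idx[OF YY] by simp
      moreover have "YY #> inv g \<in> R" using rcosets_act[OF Msub] YY g unfolding R_def by auto
      ultimately show ?thesis using e_idx YY by metis
    qed
    show ?thesis unfolding C_def core_char[OF Msub]
    proof (safe)
      show "g \<in> carrier G" by fact
      fix h assume h: "h \<in> carrier G"
      have "M #> inv h \<in> R" unfolding R_def using rcosetsI Mc h by blast
      then have "M #> inv h #> inv g = M #> inv h" using fix1 by blast
      then have "M #> (inv h \<otimes> inv g) = M #> inv h" using coset_mult_assoc[OF Mc inv_closed[OF h] inv_closed[OF g]] by simp
      then have "inv h \<otimes> inv g \<otimes> inv (inv h) \<in> M"
        using coset_eq_iff[OF Msub m_closed[OF inv_closed[OF h] inv_closed[OF g]] inv_closed[OF h]] by blast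
      moreover have "inv h \<otimes> inv g \<otimes> inv (inv h) = inv (inv h \<otimes> g \<otimes> h)"
        using h g by (simp add: inv_mult_group m_assoc)
      ultimately have "inv (inv h \<otimes> g \<otimes> h) \<in> M" by simp
      then have "inv (inv (inv h \<otimes> g \<otimes> h)) \<in> M" using subgroup.m_inv_closed[OF Msub] by blast
      then show "inv h \<otimes> g \<otimes> h \<in> M" using h g by simp
    qed
  qed
  have rho_const: "rho g' = rho g" if g: "g \<in> carrier G" and g': "g' \<in> C #> g" for g g'
  proof -
    obtain c where c: "c \<in> C" "g' = c \<otimes> g" using g' unfolding r_coset_def by auto
    have cc: "c \<in> carrier G" using c Cc by auto
    have "f g' i = f g i" for i
    proof (cases "i < n")
      case True
      have Z: "e i #> inv g \<in> R" using rcosets_act[OF Msub] eR[OF True] g unfolding R_def by auto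
      have "e i #> inv g' = (e i #> inv g) #> inv c"
        using coset_mult_assoc[OF rcosets_sub[OF Msub eR[OF True, unfolded R_def]] inv_closed[OF g] inv_closed[OF cc]]
          c g cc by (simp add: inv_mult_group)
      also have "\<dots> = e i #> inv g"
        using rcosets_core_fix[OF Msub Z[unfolded R_def]] subgroup.m_inv_closed[OF Cs c(1)] unfolding C_def by blast
      finally show ?thesis unfolding f_def by simp
    qed (simp add: f_def)
    then show ?thesis unfolding rho_def by simp
  qed
  define rhoQ where "rhoQ XX = rho (SOME g. g \<in> XX)" for XX
  have rhoQ_eq: "rhoQ (C #> a) = rho a" if a: "a \<in> carrier G" for a
  proof -
    have "a \<in> C #> a" using rcos_self[OF a Cs] .
    then have "(SOME g. g \<in> C #> a) \<in> C #> a" by (rule someI)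
    then show ?thesis unfolding rhoQ_def using rho_const[OF a] by simp
  qed
  have Qrep: "\<exists>a\<in>carrier G. XX = C #> a" if "XX \<in> carrier Q" for XX
    using that QF(2) unfolding RCOSETS_def by auto
  have "abelian_socle Q"
  proof (rule Q.perm_rep_abelian_socle[of rhoQ])
    fix XX YY assume XX: "XX \<in> carrier Q" and YY: "YY \<in> carrier Q"
    obtain a where a: "a \<in> carrier G" "XX = C #> a" using Qrep[OF XX] by blast
    obtain b where b: "b \<in> carrier G" "YY = C #> b" using Qrep[OF YY] by blast
    have eq: "XX \<otimes>\<^bsub>Q\<^esub> YY = C #> (a \<otimes> b)" by (simp only: a(2) b(2) pi.hom_mult[OF a(1) b(1)])
    have "rhoQ (XX \<otimes>\<^bsub>Q\<^esub> YY) = rho (a \<otimes> b)" unfolding eq by (rule rhoQ_eq[OF m_closed[OF a(1) b(1)]])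
    also have "\<dots> = lcomp (rho a) (rho b)" by (rule rho_hom[OF a(1) b(1)])
    also have "\<dots> = lcomp (rhoQ XX) (rhoQ YY)" by (simp only: a(2) b(2) rhoQ_eq[OF a(1)] rhoQ_eq[OF b(1)])
    finally show "rhoQ (XX \<otimes>\<^bsub>Q\<^esub> YY) = lcomp (rhoQ XX) (rhoQ YY)" .
  next
    fix XX assume XX: "XX \<in> carrier Q"
    obtain a where a: "a \<in> carrier G" "XX = C #> a" using Qrep[OF XX] by blast
    show "rhoQ XX \<in> set S4" unfolding a(2) rhoQ_eq[OF a(1)] by (rule rho_S4[OF a(1)])
  next
    fix XX assume XX: "XX \<in> carrier Q" and r: "rhoQ XX = lid"
    obtain a where a: "a \<in> carrier G" "XX = C #> a" using Qrep[OF XX] by blast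
    have "rho a = lid" using r unfolding a(2) rhoQ_eq[OF a(1)] .
    then have "a \<in> C" using rho_ker a(1) by blast
    then have "C #> a = C" using coset_one_iff[OF Cs a(1)] by blast
    then show "XX = \<one>\<^bsub>Q\<^esub>" using a(2) QF(3) by simp
  qed
  then show ?thesis unfolding Q_def C_def .
qed

end

context group begin

lemma idx_facts:
  assumes fin: "finite (carrier G)" and M: "maximal_subgroup G M"
  shows "card (rcosets M) * card M = card (carrier G)" "2 \<le> card (rcosets M)"
    "card (rcosets M) \<le> card (carrier G)" "card M > 0"
proof -
  note MD = maximal_subgroupD[OF M]
  show L: "card (rcosets M) * card M = card (carrier G)" using lagrange[OF MD(1)] unfolding Coset.order_def .
  have Mc: "M \<subseteq> carrier G" using MD(1) subgroup.subset by blast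
  have fM: "finite M" using Mc fin finite_subset by blast
  show cM: "card M > 0" using fM subgroup.one_closed[OF MD(1)] card_gt_0_iff by blast
  have cG: "card (carrier G) > 0" using fin card_gt_0_iff by blast
  have ne0: "card (rcosets M) \<noteq> 0"
  proof
    assume "card (rcosets M) = 0"
    then show False using L cG by simp
  qed
  have ne1: "card (rcosets M) \<noteq> 1"
  proof
    assume "card (rcosets M) = 1"
    then have "card M = card (carrier G)" using L by simp
    then have "M = carrier G" using card_subset_eq[OF fin Mc] by simp
    then show False using MD(2) by simp
  qed
  show "2 \<le> card (rcosets M)" using ne0 ne1 by linarith
  show "card (rcosets M) \<le> card (carrier G)" using L cM
    by (metis dvd_imp_le dvd_triv_left cG)
qed

lemma finite_max:
  assumes fin: "finite (carrier G)"
  shows "finite {M. maximal_subgroup G M}"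
proof (rule finite_subset[of _ "Pow (carrier G)"])
  show "{M. maximal_subgroup G M} \<subseteq> Pow (carrier G)"
    using maximal_subgroupD(1) subgroup.subset by blast
qed (use fin in auto)

lemma nongen_bound:
  assumes fin: "finite (carrier G)"
  shows "1 - gen_prob G n \<le> (\<Sum>M\<in>{M. maximal_subgroup G M}. 1 / real (card (rcosets M)) ^ n)"
    "0 \<le> 1 - gen_prob G n" "1 - gen_prob G n \<le> 1"
proof -
  define T where "T = {..<n} \<rightarrow>\<^sub>E carrier G"
  define GEN where "GEN = {f \<in> T. generate G (f ` {..<n}) = carrier G}"
  define Max where "Max = {M. maximal_subgroup G M}"
  have fT: "finite T" unfolding T_def using fin by (simp add: finite_PiE)
  have cT: "card T = card (carrier G) ^ n" unfolding T_def using card_PiE[of "{..<n}" "\<lambda>_. carrier G"] by simp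
  have cG: "card (carrier G) > 0" using fin card_gt_0_iff by blast
  have gp: "gen_prob G n = real (card GEN) / real (card (carrier G)) ^ n"
    unfolding gen_prob_def GEN_def T_def by simp
  have GT: "GEN \<subseteq> T" unfolding GEN_def by auto
  have split: "card T = card GEN + card (T - GEN)"
    using card_Diff_subset[OF finite_subset[OF GT fT] GT] card_mono[OF fT GT] by simp
  have pos: "real (card (carrier G)) ^ n > 0" using cG by simp
  have rs: "real (card (carrier G)) ^ n = real (card GEN) + real (card (T - GEN))"
    using split cT by (metis of_nat_add of_nat_power)
  have eq1: "1 - gen_prob G n = real (card (T - GEN)) / real (card (carrier G)) ^ n"
    using gp rs pos by (simp add: field_simps)
  show "0 \<le> 1 - gen_prob G n" using eq1 pos by simp
  show "1 - gen_prob G n \<le> 1"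
  proof -
    have "card (T - GEN) \<le> card T" using fT by (simp add: card_mono)
    then have "real (card (T - GEN)) \<le> real (card (carrier G)) ^ n" using cT by (metis of_nat_le_iff of_nat_power)
    then show ?thesis using eq1 pos by simp
  qed
  have sub: "T - GEN \<subseteq> (\<Union>M\<in>Max. {..<n} \<rightarrow>\<^sub>E M)"
  proof
    fix f assume f: "f \<in> T - GEN"
    have fi: "f ` {..<n} \<subseteq> carrier G" using f unfolding T_def by auto
    have H: "subgroup (generate G (f ` {..<n})) G" using generate_is_subgroup[OF fi] .
    have ne: "generate G (f ` {..<n}) \<noteq> carrier G" using f unfolding GEN_def by auto
    obtain M where M: "maximal_subgroup G M" "generate G (f ` {..<n}) \<subseteq> M"
      using exists_maximal[OF fin H ne] by blast
    have "f ` {..<n} \<subseteq> generate G (f ` {..<n})"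
    proof
      fix x assume "x \<in> f ` {..<n}"
      then show "x \<in> generate G (f ` {..<n})" by (rule generate.incl)
    qed
    then have fM: "\<forall>i\<in>{..<n}. f i \<in> M" using M(2) by auto
    have "f \<in> extensional {..<n}" using f unfolding T_def PiE_def by auto
    then have "f \<in> {..<n} \<rightarrow>\<^sub>E M" using fM unfolding PiE_def Pi_def by auto
    then show "f \<in> (\<Union>M\<in>Max. {..<n} \<rightarrow>\<^sub>E M)" using M(1) unfolding Max_def by blast
  qed
  have fMax: "finite Max" unfolding Max_def using finite_max[OF fin] .
  have "card (T - GEN) \<le> card (\<Union>M\<in>Max. {..<n} \<rightarrow>\<^sub>E M)"
  proof (rule card_mono[OF _ sub])
    show "finite (\<Union>M\<in>Max. {..<n} \<rightarrow>\<^sub>E M)"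
    proof (rule finite_subset[OF _ fT])
      show "(\<Union>M\<in>Max. {..<n} \<rightarrow>\<^sub>E M) \<subseteq> T" unfolding T_def Max_def
        using maximal_subgroupD(1) subgroup.subset by (auto simp: PiE_def Pi_def) blast
    qed
  qed
  also have "\<dots> \<le> (\<Sum>M\<in>Max. card ({..<n} \<rightarrow>\<^sub>E M))" using card_UN_le[OF fMax] .
  also have "\<dots> = (\<Sum>M\<in>Max. card M ^ n)" 
  proof (rule sum.cong[OF refl])
    fix M show "card ({..<n} \<rightarrow>\<^sub>E M) = card M ^ n" using card_PiE[of "{..<n}" "\<lambda>_. M"] by simp
  qed
  finally have cb: "real (card (T - GEN)) \<le> (\<Sum>M\<in>Max. real (card M) ^ n)"
    by (metis (mono_tags, lifting) of_nat_le_iff of_nat_power of_nat_sum sum.cong)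
  have "1 - gen_prob G n \<le> (\<Sum>M\<in>Max. real (card M) ^ n) / real (card (carrier G)) ^ n"
    using eq1 cb pos by (simp add: divide_right_mono)
  also have "\<dots> = (\<Sum>M\<in>Max. 1 / real (card (rcosets M)) ^ n)"
    unfolding sum_divide_distrib
  proof (rule sum.cong[OF refl])
    fix M assume M: "M \<in> Max"
    have L: "real (card (rcosets M)) * real (card M) = real (card (carrier G))"
      using idx_facts(1)[OF fin M[unfolded Max_def, simplified]] by (metis of_nat_mult)
    have cM: "card M > 0" using idx_facts(4)[OF fin M[unfolded Max_def, simplified]] .
    have "real (card M) ^ n / real (card (carrier G)) ^ n = (real (card M) / real (card (carrier G))) ^ n"
      by (simp add: power_divide)
    also have "real (card M) / real (card (carrier G)) = 1 / real (card (rcosets M))"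
      unfolding L[symmetric] using cM by simp
    finally show "real (card M) ^ n / real (card (carrier G)) ^ n = 1 / real (card (rcosets M)) ^ n"
      by (simp add: power_one_over)
  qed
  finally show "1 - gen_prob G n \<le> (\<Sum>M\<in>{M. maximal_subgroup G M}. 1 / real (card (rcosets M)) ^ n)"
    unfolding Max_def .
qed

end

context group begin

lemma decomp:
  assumes fin: "finite (carrier G)"
  shows "(\<Sum>M\<in>{M. maximal_subgroup G M}. 1 / real (card (rcosets M)) ^ n)
    = (\<Sum>d\<in>{5..card (carrier G)}. real (mB G d) / real d ^ n)
      + (\<Sum>p\<in>prime_divisors_order G. \<Sum>a\<in>{1..card (carrier G)}. real (mA G (p ^ a)) / real p ^ (a * n))"
proof -
  define N where "N = card (carrier G)"
  define idx where "idx M = card (rcosets M)" for M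
  define h where "h M = 1 / real (idx M) ^ n" for M
  define TA where "TA = {M. typeA G M}"
  define TB where "TB = {M. typeB G M}"
  define P where "P = prime_divisors_order G"
  define A where "A = {1..N}"
  define D where "D = {5..N}"
  have fMax: "finite {M. maximal_subgroup G M}" using finite_max[OF fin] .
  have MaxU: "{M. maximal_subgroup G M} = TA \<union> TB"
    unfolding TA_def TB_def typeA_def typeB_def by auto
  have disj: "TA \<inter> TB = {}" unfolding TA_def TB_def typeA_def typeB_def by auto
  have fTA: "finite TA" using fMax MaxU by (metis finite_Un)
  have fTB: "finite TB" using fMax MaxU by (metis finite_Un)
  have N0: "N > 0" unfolding N_def using fin card_gt_0_iff by blast
  have fP: "finite P"
  proof (rule finite_subset[of _ "{..N}"])
    show "P \<subseteq> {..N}" unfolding P_def prime_divisors_order_def N_def using N0 N_def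
      by (auto intro: dvd_imp_le)
  qed auto
  have sumU: "(\<Sum>M\<in>{M. maximal_subgroup G M}. h M) = sum h TB + sum h TA"
    unfolding MaxU using sum.union_disjoint[OF fTA fTB disj] by (simp add: add.commute)
  have idxB: "idx M \<in> D" if M: "M \<in> TB" for M
  proof -
    have Mm: "maximal_subgroup G M" and na: "\<not> abelian_socle (G Mod core G M)"
      using M unfolding TB_def typeB_def by auto
    have "\<not> card (rcosets M) \<le> 4" using typeB_small[OF fin Mm] na by blast
    then show ?thesis using idx_facts(3)[OF fin Mm] unfolding idx_def D_def N_def by auto
  qed
  have B: "sum h TB = (\<Sum>d\<in>D. real (mB G d) / real d ^ n)"
  proof -
    have "sum h TB = (\<Sum>d\<in>D. sum h {M. M \<in> TB \<and> idx M = d})"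
    proof -
      have sub: "idx ` TB \<subseteq> D" using idxB by auto
      have fD: "finite D" unfolding D_def by simp
      show ?thesis using sum.group[OF fTB fD sub, of h] by simp
    qed
    also have "\<dots> = (\<Sum>d\<in>D. real (mB G d) / real d ^ n)"
    proof (rule sum.cong[OF refl])
      fix d assume d: "d \<in> D"
      have "sum h {M. M \<in> TB \<and> idx M = d} = (\<Sum>M\<in>{M. M \<in> TB \<and> idx M = d}. 1 / real d ^ n)"
        unfolding h_def by (rule sum.cong) auto
      also have "\<dots> = real (card {M. M \<in> TB \<and> idx M = d}) / real d ^ n" by simp
      finally have X: "sum h {M. M \<in> TB \<and> idx M = d} = real (card {M. M \<in> TB \<and> idx M = d}) / real d ^ n" .
      have se: "{M. M \<in> TB \<and> idx M = d} = {M. typeB G M \<and> card (rcosets M) = d}"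
        unfolding TB_def idx_def by auto
      show "sum h {M. M \<in> TB \<and> idx M = d} = real (mB G d) / real d ^ n"
        using X unfolding mB_def se .
    qed
    finally show ?thesis .
  qed
  define pw where "pw x = fst x ^ snd x" for x :: "nat \<times> nat"
  have idxA: "idx M \<in> pw ` (P \<times> A)" if M: "M \<in> TA" for M
  proof -
    have Mm: "maximal_subgroup G M" and ab: "abelian_socle (G Mod core G M)"
      using M unfolding TA_def typeA_def by auto
    obtain p a where pa: "Factorial_Ring.prime p" "0 < a" "card (rcosets M) = p ^ a"
      using typeA_index[OF fin Mm ab] by blast
    have L: "card (rcosets M) * card M = N" using idx_facts(1)[OF fin Mm] unfolding N_def .
    have le: "p ^ a \<le> N" using idx_facts(3)[OF fin Mm] pa(3) unfolding N_def by simp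
    have "p dvd p ^ a" using pa(2) by (simp add: dvd_power)
    moreover have "p ^ a dvd N" using L pa(3) by (metis dvd_triv_left)
    ultimately have pP: "p \<in> P" unfolding P_def prime_divisors_order_def N_def using pa(1)
      by (auto intro: dvd_trans)
    have "a < 2 ^ a" by (rule less_exp)
    also have "2 ^ a \<le> p ^ a" using pa(1) prime_ge_2_nat by (simp add: power_mono)
    finally have "a \<le> N" using le by simp
    then have aA: "a \<in> A" unfolding A_def using pa(2) by auto
    show ?thesis using pP aA pa(3) unfolding idx_def pw_def by force
  qed
  have injpw: "inj_on pw (P \<times> A)"
  proof (rule inj_onI)
    fix x y assume x: "x \<in> P \<times> A" and y: "y \<in> P \<times> A" and e: "pw x = pw y"
    obtain p a where xa: "x = (p, a)" by (cases x)
    obtain q b where yb: "y = (q, b)" by (cases y)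
    have "Factorial_Ring.prime p" "Factorial_Ring.prime q" "a > 0" "b > 0"
      using x y xa yb unfolding P_def prime_divisors_order_def A_def by auto
    then show "x = y" using e prime_power_inj'[of p q a b] xa yb unfolding pw_def by auto
  qed
  have fPA: "finite (P \<times> A)" using fP unfolding A_def by simp
  have A_: "sum h TA = (\<Sum>p\<in>P. \<Sum>a\<in>A. real (mA G (p ^ a)) / real p ^ (a * n))"
  proof -
    have "sum h TA = (\<Sum>d\<in>pw ` (P \<times> A). sum h {M. M \<in> TA \<and> idx M = d})"
    proof -
      have sub: "idx ` TA \<subseteq> pw ` (P \<times> A)" using idxA by auto
      show ?thesis using sum.group[OF fTA finite_imageI[OF fPA] sub, of h] by simp
    qed
    also have "\<dots> = (\<Sum>x\<in>P \<times> A. sum h {M. M \<in> TA \<and> idx M = pw x})"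
      using sum.reindex[OF injpw] by simp
    also have "\<dots> = (\<Sum>x\<in>P \<times> A. real (mA G (pw x)) / real (pw x) ^ n)"
    proof (rule sum.cong[OF refl])
      fix x assume x: "x \<in> P \<times> A"
      have "sum h {M. M \<in> TA \<and> idx M = pw x} = (\<Sum>M\<in>{M. M \<in> TA \<and> idx M = pw x}. 1 / real (pw x) ^ n)"
        unfolding h_def by (rule sum.cong) auto
      also have "\<dots> = real (card {M. M \<in> TA \<and> idx M = pw x}) / real (pw x) ^ n" by simp
      finally have X: "sum h {M. M \<in> TA \<and> idx M = pw x} = real (card {M. M \<in> TA \<and> idx M = pw x}) / real (pw x) ^ n" .
      have se: "{M. M \<in> TA \<and> idx M = pw x} = {M. typeA G M \<and> card (rcosets M) = pw x}"
        unfolding TA_def idx_def by auto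
      show "sum h {M. M \<in> TA \<and> idx M = pw x} = real (mA G (pw x)) / real (pw x) ^ n"
        using X unfolding mA_def se .
    qed
    also have "\<dots> = (\<Sum>(p, a)\<in>P \<times> A. real (mA G (p ^ a)) / real p ^ (a * n))"
      unfolding pw_def by (rule sum.cong) (auto simp: power_mult)
    also have "\<dots> = (\<Sum>p\<in>P. \<Sum>a\<in>A. real (mA G (p ^ a)) / real p ^ (a * n))"
      by (rule sum.cartesian_product[symmetric])
    finally show ?thesis .
  qed
  show ?thesis
    using sumU B A_ unfolding h_def idx_def D_def P_def A_def N_def by simp
qed

end

lemma summable_geom_shift:
  fixes x c :: real
  assumes "x \<ge> 2"
  shows "summable (\<lambda>k. c / x ^ (k + t))"
proof -
  have g: "summable (\<lambda>k. (1 / x) ^ k)" using assms by (intro summable_geometric) auto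
  have s: "summable (\<lambda>k. (c / x ^ t) * (1 / x) ^ k)" by (rule summable_mult[OF g])
  have eq: "(\<lambda>k. (c / x ^ t) * (1 / x) ^ k) = (\<lambda>k. c / x ^ (k + t))"
    by (rule ext) (simp add: power_add power_one_over field_simps)
  show ?thesis using s unfolding eq .
qed

context group begin

lemma main_bound:
  assumes fin: "finite (carrier G)" and t: "0 < t"
  shows "expected_gen G \<le> real t + mu_star G t + (\<Sum>p\<in>prime_divisors_order G. mu_p G p t)"
proof -
  define N where "N = card (carrier G)"
  define Max where "Max = {M. maximal_subgroup G M}"
  define f where "f n = 1 - gen_prob G n" for n
  define b where "b n = (\<Sum>M\<in>Max. 1 / real (card (rcosets M)) ^ n)" for n
  define B where "B k = (\<Sum>d\<in>{5..N}. real (mB G d) / real d ^ (k + t))" for k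
  define A where "A p k = (\<Sum>a\<in>{1..N}. real (mA G (p ^ a)) / real p ^ (a * (k + t)))" for p k
  define P where "P = prime_divisors_order G"
  have fMax: "finite Max" unfolding Max_def using finite_max[OF fin] .
  have fb: "f n \<le> b n" "0 \<le> f n" "f n \<le> 1" for n
    unfolding f_def b_def Max_def using nongen_bound[OF fin] by auto
  have bsum: "summable b"
    unfolding b_def
  proof (rule summable_sum)
    fix M assume M: "M \<in> Max"
    have "2 \<le> card (rcosets M)" using idx_facts(2)[OF fin] M unfolding Max_def by auto
    then have "summable (\<lambda>n. 1 / real (card (rcosets M)) ^ (n + 0))"
      by (intro summable_geom_shift) simp
    then show "summable (\<lambda>n. 1 / real (card (rcosets M)) ^ n)" by simp
  qed
  have fsum: "summable f"
  proof (rule summable_comparison_test[OF _ bsum])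
    show "\<exists>N. \<forall>n\<ge>N. norm (f n) \<le> b n" using fb by auto
  qed
  have Bsum: "summable B" unfolding B_def
    by (intro summable_sum summable_geom_shift) auto
  have Asum: "summable (A p)" if p: "p \<in> P" for p
  proof -
    have p2: "p \<ge> 2" using p unfolding P_def prime_divisors_order_def using prime_ge_2_nat by auto
    show ?thesis unfolding A_def
    proof (intro summable_sum)
      fix a assume a: "a \<in> {1..N}"
      have "real p ^ a \<ge> real p ^ 1" using p2 a by (intro power_increasing) auto
      moreover have "real p ^ 1 = real p" by (rule power_one_right)
      moreover have "real p \<ge> 2" using p2 by simp
      ultimately have "real p ^ a \<ge> 2" by linarith
      then have "summable (\<lambda>k. real (mA G (p ^ a)) / (real p ^ a) ^ (k + t))"
        by (rule summable_geom_shift)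
      then show "summable (\<lambda>k. real (mA G (p ^ a)) / real p ^ (a * (k + t)))"
        by (simp add: power_mult)
    qed
  qed
  have dec: "b (k + t) = B k + (\<Sum>p\<in>P. A p k)" for k
    unfolding b_def B_def A_def P_def Max_def N_def using decomp[OF fin, of "k + t"] by simp
  have e1: "expected_gen G = suminf (\<lambda>n. f (n + t)) + sum f {..<t}"
    unfolding expected_gen_def f_def[symmetric] using suminf_split_initial_segment[OF fsum] .
  have e2: "sum f {..<t} \<le> real t"
  proof -
    have "sum f {..<t} \<le> (\<Sum>n<t. 1)" by (rule sum_mono) (use fb in auto)
    then show ?thesis by simp
  qed
  have e3: "suminf (\<lambda>n. f (n + t)) \<le> suminf (\<lambda>n. b (n + t))"
    by (rule suminf_le) (use fb summable_ignore_initial_segment[OF fsum] summable_ignore_initial_segment[OF bsum] in auto)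
  have e4: "suminf (\<lambda>n. b (n + t)) = suminf B + (\<Sum>p\<in>P. suminf (A p))"
  proof -
    have "suminf (\<lambda>n. b (n + t)) = suminf (\<lambda>k. B k + (\<Sum>p\<in>P. A p k))" using dec by simp
    also have "\<dots> = suminf B + suminf (\<lambda>k. \<Sum>p\<in>P. A p k)"
      by (rule suminf_add[symmetric]) (use Bsum Asum in \<open>auto intro: summable_sum\<close>)
    also have "suminf (\<lambda>k. \<Sum>p\<in>P. A p k) = (\<Sum>p\<in>P. suminf (A p))"
      by (rule suminf_sum) (use Asum in auto)
    finally show ?thesis .
  qed
  have "mu_star G t = suminf B" unfolding mu_star_def B_def N_def ..
  moreover have "mu_p G p t = suminf (A p)" for p unfolding mu_p_def A_def N_def ..
  ultimately show ?thesis using e1 e2 e3 e4 unfolding P_def by simp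
qed

end

theorem lemma2:
  fixes G :: "('a, 'b) monoid_scheme" and t :: nat
  assumes "group G" and "finite (carrier G)" and "0 < t"
  shows "expected_gen G \<le> real t + mu_star G t + (\<Sum>p\<in>prime_divisors_order G. mu_p G p t)"
  using group.main_bound[OF assms] .

end
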